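(* For $b>\sqrt{\pi/2}$ let $\phi_b$ be the solution of $\phi''=8\pi(1-e^\phi)$ on $\mathbb R$ with smallest period $b$ attaining its maximum at $y=0$, let $\phi_0=\phi_b(0)$, $f_0=e^{\phi_0}-\phi_0$, $\beta=\sqrt\pi\,b$, and define $\rho(\beta,s)=\phi_b(bs/2)$ and $$M=M(\beta)=\frac12\int_0^1\rho(1+e^\rho)\,ds.$$ Then (a) $\displaystyle\frac{dM}{d\beta}=\frac1\beta\int_0^1\rho(1-e^\rho)\,ds$; (b) $\displaystyle\frac{d(\beta M)}{d\beta}=\frac12\int_0^1\rho(3-e^\rho)\,ds=1-f_0$.
   Context: For each $b>\sqrt{\pi/2}$ there is a unique smooth solution $\phi_b$ of $\phi''=8\pi(1-e^{\phi})$ on $\mathbb R$ which is periodic with smallest period $b$ and attains its maximum at $y=0$; it is even, depends smoothly on $b$, and $\rho(\beta,s)$ satisfies $\partial_s^2\rho=2\beta^2(1-e^\rho)$. *)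

theory Defs
  imports "HOL-Analysis.Analysis"
begin

definition is_phi_b :: "real \<Rightarrow> (real \<Rightarrow> real) \<Rightarrow> bool" where
  "is_phi_b b \<phi> \<longleftrightarrow>
     (\<forall>y. (\<phi> has_real_derivative deriv \<phi> y) (at y)) \<and>
     (\<forall>y. (deriv \<phi> has_real_derivative 8 * pi * (1 - exp (\<phi> y))) (at y)) \<and>
     b > 0 \<and> (\<forall>y. \<phi> (y + b) = \<phi> y) \<and>
     (\<forall>p. 0 < p \<and> p < b \<longrightarrow> \<not> (\<forall>y. \<phi> (y + p) = \<phi> y)) \<and>
     (\<forall>y. \<phi> y \<le> \<phi> 0)"

definition rho :: "(real \<Rightarrow> real \<Rightarrow> real) \<Rightarrow> real \<Rightarrow> real \<Rightarrow> real" where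
  "rho phi \<beta> s = phi (\<beta> / sqrt pi) ((\<beta> / sqrt pi) * s / 2)"

definition Mfun :: "(real \<Rightarrow> real \<Rightarrow> real) \<Rightarrow> real \<Rightarrow> real" where
  "Mfun phi \<beta> = 1/2 * integral {0..1} (\<lambda>s. rho phi \<beta> s * (1 + exp (rho phi \<beta> s)))"

end

theory Submission
  imports Defs
begin
lemma exp_lip:
  fixes a b m :: real
  assumes "a \<le> m" "b \<le> m"
  shows "\<bar>exp a - exp b\<bar> \<le> exp m * \<bar>a - b\<bar>"
proof -
  have *: "exp y - exp x \<le> exp m * (y - x)" if "x \<le> y" "y \<le> m" for x y :: real
  proof -
    have "1 + (x - y) \<le> exp (x - y)" by (rule exp_ge_add_one_self)
    hence "1 - exp (x - y) \<le> y - x" by linarith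
    hence "exp y * (1 - exp (x - y)) \<le> exp y * (y - x)" by (intro mult_left_mono) auto
    moreover have "exp y * (1 - exp (x - y)) = exp y - exp x"
      by (simp add: right_diff_distrib exp_diff)
    ultimately have "exp y - exp x \<le> exp y * (y - x)" by simp
    also have "\<dots> \<le> exp m * (y - x)" using that by (intro mult_right_mono) auto
    finally show ?thesis .
  qed
  show ?thesis
  proof (cases "a \<le> b")
    case True then show ?thesis using *[of a b] assms by (simp add: abs_if)
  next
    case False then show ?thesis using *[of b a] assms by (simp add: abs_if)
  qed
qed

lemma even_sol:
  fixes f f' :: "real \<Rightarrow> real"
  assumes d1: "\<And>y. (f has_real_derivative f' y) (at y)"
    and d2: "\<And>y. (f' has_real_derivative 8*pi*(1 - exp (f y))) (at y)"
    and mx: "\<And>y. f y \<le> f 0"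
  shows "f (-y) = f y"
proof -
  have f'0: "f' 0 = 0"
    by (rule DERIV_local_max[OF d1, of 1]) (auto simp: mx)
  define g where "g y = f (-y)" for y
  define g' where "g' y = - f' (-y)" for y
  have g1: "(g has_real_derivative g' y) (at y)" for y
    unfolding g_def g'_def
    using DERIV_chain2[OF d1 DERIV_minus[OF DERIV_ident]] by (simp add: o_def)
  have g2: "(g' has_real_derivative 8*pi*(1 - exp (g y))) (at y)" for y
    unfolding g_def g'_def
    using DERIV_minus[OF DERIV_chain2[OF d2 DERIV_minus[OF DERIV_ident]]] by (simp add: o_def)
  define C where "C = 1 + 8*pi*exp (f 0)"
  define E where "E y = (f y - g y)^2 + (f' y - g' y)^2" for y
  define E' where "E' y = 2*(f y - g y)*(f' y - g' y) + 2*(f' y - g' y)*(8*pi*(exp (g y) - exp (f y)))" for y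
  have dE: "(E has_real_derivative E' y) (at y)" for y
    unfolding E_def E'_def
    by (auto intro!: derivative_eq_intros d1 d2 g1 g2 simp: algebra_simps)
  have E'le: "E' y \<le> C * E y" for y
  proof -
    let ?d = "f y - g y" and ?e = "f' y - g' y"
    have gm: "g y \<le> f 0" unfolding g_def by (rule mx)
    have L: "\<bar>exp (g y) - exp (f y)\<bar> \<le> exp (f 0) * \<bar>?d\<bar>"
      using exp_lip[OF gm mx[of y]] by (simp add: abs_minus_commute)
    have a1: "?d * ?e \<le> \<bar>?d\<bar>*\<bar>?e\<bar>" by (metis abs_ge_self abs_mult)
    have a2: "?e * (exp (g y) - exp (f y)) \<le> \<bar>?e\<bar>*\<bar>exp (g y) - exp (f y)\<bar>" by (metis abs_ge_self abs_mult)
    have "E' y = 2*(?d * ?e) + 16*pi*(?e * (exp (g y) - exp (f y)))" unfolding E'_def by (simp add: algebra_simps)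
    also have "\<dots> \<le> 2*(\<bar>?d\<bar>*\<bar>?e\<bar>) + 16*pi*(\<bar>?e\<bar>*\<bar>exp (g y) - exp (f y)\<bar>)"
      using a1 a2 pi_ge_zero by (intro add_mono mult_left_mono) auto
    also have "\<dots> = 2*\<bar>?d\<bar>*\<bar>?e\<bar> + 2*\<bar>?e\<bar>*(8*pi*\<bar>exp (g y) - exp (f y)\<bar>)" by simp
    also have "\<dots> \<le> 2*\<bar>?d\<bar>*\<bar>?e\<bar> + 2*\<bar>?e\<bar>*(8*pi*(exp (f 0) * \<bar>?d\<bar>))"
      using L by (intro add_left_mono mult_left_mono) auto
    also have "\<dots> = C * (2*\<bar>?d\<bar>*\<bar>?e\<bar>)" unfolding C_def by (simp add: algebra_simps)
    also have "\<dots> \<le> C * E y"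
    proof (rule mult_left_mono)
      have "0 \<le> (\<bar>?d\<bar> - \<bar>?e\<bar>)^2" by simp
      then show "2*\<bar>?d\<bar>*\<bar>?e\<bar> \<le> E y" unfolding E_def by (simp add: power2_eq_square algebra_simps)
      show "0 \<le> C" unfolding C_def by (simp add: add_nonneg_nonneg)
    qed
    finally show ?thesis .
  qed
  define h where "h y = exp (- C * y) * E y" for y
  have hd: "(h has_real_derivative exp (- C * y) * (E' y - C * E y)) (at y)" for y
    unfolding h_def by (auto intro!: derivative_eq_intros dE simp: algebra_simps)
  have E0: "E 0 = 0" unfolding E_def g_def g'_def using f'0 by simp
  have Ez: "E y = 0" if "y \<ge> 0" for y
  proof -
    have "h y \<le> h 0"
    proof (rule DERIV_nonpos_imp_nonincreasing[OF that])
      fix x :: real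
      have "exp (- C * x) * (E' x - C * E x) \<le> 0"
        using E'le[of x] by (intro mult_nonneg_nonpos) auto
      then show "\<exists>y. DERIV h x :> y \<and> y \<le> 0" using hd[of x] by blast
    qed
    hence "E y \<le> 0" using E0 unfolding h_def by (simp add: mult_le_0_iff)
    moreover have "E y \<ge> 0" unfolding E_def by simp
    ultimately show ?thesis by simp
  qed
  have ev: "f y = f (-y)" if "y \<ge> 0" for y
    using Ez[OF that] unfolding E_def g_def by (simp add: add_nonneg_eq_0_iff)
  show ?thesis
  proof (cases "y \<ge> 0")
    case True then show ?thesis using ev by simp
  next
    case False then show ?thesis using ev[of "-y"] by simp
  qed
qed

lemma phi_facts:
  assumes P: "is_phi_b b f"
  shows "((\<lambda>s. f (b * s / 2)) has_real_derivative b/2 * deriv f (b * s / 2)) (at s)"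
    and "((\<lambda>s. b/2 * deriv f (b * s / 2)) has_real_derivative 2*pi*b^2*(1 - exp (f (b * s / 2)))) (at s)"
    and "b/2 * deriv f (b * 0 / 2) = 0" and "b/2 * deriv f (b * 1 / 2) = 0"
proof -
  note P' = P[unfolded is_phi_b_def]
  have d1: "\<And>y. (f has_real_derivative deriv f y) (at y)"
    using conjunct1[OF P'] by blast
  have d2: "\<And>y. (deriv f has_real_derivative 8*pi*(1 - exp (f y))) (at y)"
    using conjunct1[OF conjunct2[OF P']] by blast
  have per: "\<And>y. f (y+b) = f y"
    using conjunct1[OF conjunct2[OF conjunct2[OF conjunct2[OF P']]]] by blast
  have mx: "\<And>y. f y \<le> f 0"
    using conjunct2[OF conjunct2[OF conjunct2[OF conjunct2[OF conjunct2[OF P']]]]] by blast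
  have ev: "f (-y) = f y" for y by (rule even_sol[OF d1 d2 mx])
  have "((\<lambda>s. f (b * s / 2)) has_real_derivative deriv f (b * s / 2) * (b/2)) (at s)"
    by (rule DERIV_chain2[OF d1]) (auto intro!: derivative_eq_intros)
  then show "((\<lambda>s. f (b * s / 2)) has_real_derivative b/2 * deriv f (b * s / 2)) (at s)"
    by (rule DERIV_cong) simp
  have "((\<lambda>s. deriv f (b * s / 2)) has_real_derivative 8*pi*(1 - exp (f (b * s / 2))) * (b/2)) (at s)"
    by (rule DERIV_chain2[OF d2]) (auto intro!: derivative_eq_intros)
  from DERIV_cmult[OF this, of "b/2"]
  show "((\<lambda>s. b/2 * deriv f (b * s / 2)) has_real_derivative 2*pi*b^2*(1 - exp (f (b * s / 2)))) (at s)"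
    by (rule DERIV_cong) (simp add: power2_eq_square)
  have "deriv f 0 = 0" by (rule DERIV_local_max[OF d1[of 0], of 1]) (auto simp: mx)
  then show "b/2 * deriv f (b * 0 / 2) = 0" by simp
  have eq: "(\<lambda>t. f (b/2 + t)) = (\<lambda>t. f (b/2 - t))"
  proof
    fix t
    have "f (b/2 + t) = f ((t - b/2) + b)" by (simp add: algebra_simps)
    also have "\<dots> = f (t - b/2)" by (rule per)
    also have "\<dots> = f (- (b/2 - t))" by simp
    also have "\<dots> = f (b/2 - t)" by (rule ev)
    finally show "f (b/2 + t) = f (b/2 - t)" .
  qed
  have k1: "((\<lambda>t. f (b/2 + t)) has_real_derivative deriv f (b/2) * 1) (at 0)"
    apply (rule DERIV_chain2[where f=f and g="\<lambda>t. b/2 + t" and x=0])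
    using d1[of "b/2"] by (auto intro!: derivative_eq_intros)
  have k2: "((\<lambda>t. f (b/2 - t)) has_real_derivative deriv f (b/2) * (-1)) (at 0)"
    apply (rule DERIV_chain2[where f=f and g="\<lambda>t. b/2 - t" and x=0])
    using d1[of "b/2"] by (auto intro!: derivative_eq_intros)
  have "deriv f (b/2) * 1 = deriv f (b/2) * (-1)"
    using DERIV_unique[OF k1 k2[folded eq]] .
  then show "b/2 * deriv f (b * 1 / 2) = 0" by simp
qed

lemma green01:
  fixes u u' v v' v'' :: "real \<Rightarrow> real"
  assumes du: "\<And>s. (u has_real_derivative u' s) (at s)"
    and dv: "\<And>s. (v has_real_derivative v' s) (at s)"
    and dv': "\<And>s. (v' has_real_derivative v'' s) (at s)"
    and c: "continuous_on {0..1} v''"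
    and b0: "v' 0 = 0" and b1: "v' 1 = 0"
  shows "integral {0..1} (\<lambda>s. u s * v'' s) = - integral {0..1} (\<lambda>s. u' s * v' s)"
proof -
  have "((\<lambda>s. u' s * v' s + u s * v'' s) has_integral (u 1 * v' 1 - u 0 * v' 0)) {0..1}"
  proof (rule fundamental_theorem_of_calculus)
    fix x :: real
    have "((\<lambda>s. u s * v' s) has_real_derivative u' x * v' x + u x * v'' x) (at x)"
      by (auto intro!: derivative_eq_intros du dv')
    then show "((\<lambda>s. u s * v' s) has_vector_derivative u' x * v' x + u x * v'' x) (at x within {0..1})"
      by (simp add: has_real_derivative_iff_has_vector_derivative has_vector_derivative_at_within)
  qed simp
  then have I: "((\<lambda>s. u' s * v' s + u s * v'' s) has_integral 0) {0..1}" using b0 b1 by simp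
  have cu: "continuous_on {0..1} u"
    using du by (meson DERIV_continuous continuous_at_imp_continuous_on)
  have J: "(\<lambda>s. u s * v'' s) integrable_on {0..1}"
    by (intro integrable_continuous_interval continuous_intros cu c)
  have "((\<lambda>s. (u' s * v' s + u s * v'' s) - u s * v'' s) has_integral 0 - integral {0..1} (\<lambda>s. u s * v'' s)) {0..1}"
    by (intro has_integral_diff I integrable_integral J)
  then have "integral {0..1} (\<lambda>s. u' s * v' s) = 0 - integral {0..1} (\<lambda>s. u s * v'' s)"
    by (simp add: integral_unique)
  then show ?thesis by simp
qed

lemma leib:
  fixes f fx :: "real \<Rightarrow> real \<Rightarrow> real"
  assumes U: "open U" "convex U" "x0 \<in> U"
    and d: "\<And>x t. x \<in> U \<Longrightarrow> t \<in> {0..1} \<Longrightarrow> ((\<lambda>x. f x t) has_real_derivative fx x t) (at x)"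
    and ci: "\<And>x. x \<in> U \<Longrightarrow> continuous_on {0..1} (f x)"
    and cd: "continuous_on (U \<times> {0..1}) (\<lambda>p. fx (fst p) (snd p))"
  shows "((\<lambda>x. integral {0..1} (f x)) has_real_derivative integral {0..1} (fx x0)) (at x0)"
proof -
  have "((\<lambda>x. integral (cbox 0 1) (f x)) has_real_derivative integral (cbox 0 1) (fx x0)) (at x0 within U)"
  proof (rule leibniz_rule_field_derivative[OF _ _ _ U(3,2)])
    fix x t :: real
    assume "x \<in> U" "t \<in> cbox 0 1"
    then have "x \<in> U" "t \<in> {0..1}" by auto
    from d[OF this] show "((\<lambda>x. f x t) has_real_derivative fx x t) (at x within U)"
      by (rule has_field_derivative_at_within)
  next
    fix x :: real
    assume "x \<in> U"
    from ci[OF this] have "f x integrable_on {0..1}" by (rule integrable_continuous_interval)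
    then show "f x integrable_on cbox 0 1" by simp
  next
    have "(\<lambda>(x, t). fx x t) = (\<lambda>p. fx (fst p) (snd p))" by (simp add: fun_eq_iff)
    then show "continuous_on (U \<times> cbox 0 1) (\<lambda>(x, t). fx x t)"
      using cd by simp
  qed
  then show ?thesis
    unfolding cbox_interval at_within_open[OF U(3) U(1)] .
qed

lemma deriv_eq_on_open:
  fixes f g :: "real \<Rightarrow> real"
  assumes "open U" "x0 \<in> U" "(f has_real_derivative a) (at x0)" "(g has_real_derivative b) (at x0)"
    and "\<And>x. x \<in> U \<Longrightarrow> f x = g x"
  shows "a = b"
proof -
  have "(g has_real_derivative a) (at x0)"
    by (rule has_field_derivative_transform_within_open[OF assms(3,1,2)]) (rule assms(5))
  then show ?thesis by (rule DERIV_unique[OF _ assms(4)])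
qed


lemma ftc01:
  fixes F f :: "real \<Rightarrow> real"
  assumes d: "\<And>s. (F has_real_derivative f s) (at s)"
  shows "(f has_integral (F 1 - F 0)) {0..1}"
proof (rule fundamental_theorem_of_calculus)
  fix x :: real
  show "(F has_vector_derivative f x) (at x within {0..1})"
    using d[of x] by (simp add: has_real_derivative_iff_has_vector_derivative has_vector_derivative_at_within)
qed simp

theorem proposition2p4:
  fixes phi :: "real \<Rightarrow> real \<Rightarrow> real"
  assumes sol: "\<And>b. b > sqrt (pi / 2) \<Longrightarrow> is_phi_b b (phi b)"
    and smooth: "\<exists>D. (\<forall>p \<in> {b. b > sqrt (pi / 2)} \<times> UNIV.
                   ((\<lambda>q. phi (fst q) (snd q)) has_derivative blinfun_apply (D p)) (at p)) \<and>
                 continuous_on ({b. b > sqrt (pi / 2)} \<times> UNIV) D"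
    and beta: "\<beta> > sqrt pi * sqrt (pi / 2)"
  shows "(Mfun phi has_real_derivative
            (1 / \<beta>) * integral {0..1} (\<lambda>s. rho phi \<beta> s * (1 - exp (rho phi \<beta> s)))) (at \<beta>) \<and>
          ((\<lambda>x. x * Mfun phi x) has_real_derivative
            1/2 * integral {0..1} (\<lambda>s. rho phi \<beta> s * (3 - exp (rho phi \<beta> s)))) (at \<beta>) \<and>
          1/2 * integral {0..1} (\<lambda>s. rho phi \<beta> s * (3 - exp (rho phi \<beta> s)))
           = 1 - (exp (phi (\<beta> / sqrt pi) 0) - phi (\<beta> / sqrt pi) 0)"
proof -
  define Dom where "Dom = {b. b > sqrt (pi / 2)} \<times> (UNIV :: real set)"
  define \<Phi> where "\<Phi> = (\<lambda>q::real\<times>real. phi (fst q) (snd q))"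
  obtain D where Dd: "\<And>p. p \<in> Dom \<Longrightarrow> (\<Phi> has_derivative blinfun_apply (D p)) (at p)"
    and Dc: "continuous_on Dom D"
    using smooth unfolding Dom_def \<Phi>_def by blast
  define c where "c = sqrt pi * sqrt (pi/2)"
  define U where "U = {c<..}"
  have sp: "sqrt pi > 0" by simp
  have cpos: "c > 0" unfolding c_def by simp
  have oU: "open U" and cvU: "convex U" unfolding U_def by auto
  have bU: "\<beta> \<in> U" using beta unfolding U_def c_def by simp
  have Upos: "x > 0" if "x \<in> U" for x using that cpos unfolding U_def by simp
  have Ub: "x / sqrt pi > sqrt (pi/2)" if "x \<in> U" for x
  proof -
    from that have "sqrt pi * sqrt (pi/2) < x" by (simp add: U_def c_def)
    then show ?thesis using sp by (simp add: pos_less_divide_eq mult.commute)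
  qed
  define r where "r = (\<lambda>x s. phi (x/sqrt pi) ((x/sqrt pi) * s / 2))"
  define dr where "dr = (\<lambda>x s. (x/sqrt pi)/2 * deriv (phi (x/sqrt pi)) ((x/sqrt pi) * s / 2))"
  have rr: "rho phi = r" by (intro ext) (simp add: rho_def r_def)
  have R1: "(r x has_real_derivative dr x s) (at s)" if "x \<in> U" for x s
    unfolding r_def dr_def by (rule phi_facts(1)[OF sol[OF Ub[OF that]]])
  have R2: "(dr x has_real_derivative 2*x^2*(1 - exp (r x s))) (at s)" if "x \<in> U" for x s
  proof -
    have "(dr x has_real_derivative 2*pi*(x/sqrt pi)^2*(1 - exp (r x s))) (at s)"
      unfolding r_def dr_def by (rule phi_facts(2)[OF sol[OF Ub[OF that]]])
    then show ?thesis by (rule DERIV_cong) (simp add: power_divide)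
  qed
  have R30: "dr x 0 = 0" if "x \<in> U" for x
    using phi_facts(3)[OF sol[OF Ub[OF that]]] unfolding dr_def by simp
  have R31: "dr x 1 = 0" if "x \<in> U" for x
    using phi_facts(4)[OF sol[OF Ub[OF that]]] unfolding dr_def by simp
  have cr: "continuous_on {0..1} (r x)" if "x \<in> U" for x
    using R1[OF that] by (meson DERIV_continuous continuous_at_imp_continuous_on)
  have cdr: "continuous_on {0..1} (dr x)" if "x \<in> U" for x
    using R2[OF that] by (meson DERIV_continuous continuous_at_imp_continuous_on)
  define vs where "vs = (\<lambda>s::real. (1/sqrt pi, (1/sqrt pi) * s / 2))"
  define q where "q = (\<lambda>x s::real. x *\<^sub>R vs s)"
  have rq: "r x s = \<Phi> (q x s)" for x s by (simp add: r_def \<Phi>_def q_def vs_def)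
  have qD: "q x s \<in> Dom" if "x \<in> U" for x s
    using Ub[OF that] by (simp add: q_def vs_def Dom_def)
  define W where "W = (\<lambda>x s. blinfun_apply (D (q x s)) (vs s))"
  have dW: "((\<lambda>x. r x s) has_real_derivative W x s) (at x)" if "x \<in> U" for x s
  proof -
    have h1: "((\<lambda>x. q x s) has_derivative (\<lambda>h. h *\<^sub>R vs s)) (at x)"
      unfolding q_def by (auto intro!: derivative_eq_intros)
    have "((\<lambda>x. \<Phi> (q x s)) has_derivative (\<lambda>h. blinfun_apply (D (q x s)) (h *\<^sub>R vs s))) (at x)"
      by (rule has_derivative_compose[OF h1 Dd[OF qD[OF that]]])
    moreover have "(\<lambda>h. blinfun_apply (D (q x s)) (h *\<^sub>R vs s)) = (*) (W x s)"
      by (simp add: W_def fun_eq_iff blinfun.scaleR_right)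
    ultimately show ?thesis unfolding has_field_derivative_def rq by simp
  qed
  have cPhi: "continuous_on Dom \<Phi>"
    using Dd by (meson has_derivative_continuous continuous_at_imp_continuous_on)
  have cq: "continuous_on (U \<times> {0..1}) (\<lambda>p. q (fst p) (snd p))"
    unfolding q_def vs_def by (intro continuous_intros) auto
  have qimg: "(\<lambda>p. q (fst p) (snd p)) ` (U \<times> {0..1}) \<subseteq> Dom" using qD by auto
  have cR: "continuous_on (U \<times> {0..1}) (\<lambda>p. r (fst p) (snd p))"
    unfolding rq by (rule continuous_on_compose2[OF cPhi cq qimg])
  have cW: "continuous_on (U \<times> {0..1}) (\<lambda>p. W (fst p) (snd p))"
  proof -
    have "continuous_on (U \<times> {0..1}) (\<lambda>p. D (q (fst p) (snd p)))"
      by (rule continuous_on_compose2[OF Dc cq qimg])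
    moreover have "continuous_on (U \<times> {0..1}) (\<lambda>p. vs (snd p))"
      unfolding vs_def by (intro continuous_intros) auto
    ultimately show ?thesis unfolding W_def by (intro continuous_intros)
  qed
  have crb: "continuous_on (U \<times> {0..1}) (\<lambda>p. r \<beta> (snd p))"
    by (rule continuous_on_compose2[OF cr[OF bU]]) (auto intro!: continuous_intros)
  have cWb: "continuous_on {0..1} (W \<beta>)"
  proof -
    have "continuous_on {0..1} (\<lambda>t. W (fst (\<beta>, t)) (snd (\<beta>, t)))"
      by (rule continuous_on_compose2[OF cW, of _ "\<lambda>t. (\<beta>, t)"]) (auto intro!: continuous_intros simp: bU)
    then show ?thesis by simp
  qed
  have intI: "(f has_integral integral {0..1} f) {0..1}" if "continuous_on {0..1} f" for f :: "real \<Rightarrow> real"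
    by (rule integrable_integral[OF integrable_continuous_interval[OF that]])
  have Z0: "((\<lambda>t. 1 - exp (r x t)) has_integral 0) {0..1}" if "x \<in> U" for x
  proof -
    have "((\<lambda>t. 2*x^2*(1 - exp (r x t))) has_integral (dr x 1 - dr x 0)) {0..1}"
      by (rule ftc01[OF R2[OF that]])
    then have h: "((\<lambda>t. 2*x^2*(1 - exp (r x t))) has_integral 0) {0..1}"
      using R30[OF that] R31[OF that] by simp
    have "((\<lambda>t. 1/(2*x^2) * (2*x^2*(1 - exp (r x t)))) has_integral 1/(2*x^2) * 0) {0..1}"
      by (rule has_integral_mult_right[OF h])
    moreover have "\<And>t. 1/(2*x^2) * (2*x^2*(1 - exp (r x t))) = 1 - exp (r x t)"
      using Upos[OF that] by simp
    ultimately show ?thesis by simp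
  qed
  have LZ: "((\<lambda>x. integral {0..1} (\<lambda>t. 1 - exp (r x t))) has_real_derivative
      integral {0..1} (\<lambda>t. -(exp (r \<beta> t) * W \<beta> t))) (at \<beta>)"
    by (rule leib[where f="\<lambda>x t. 1 - exp (r x t)" and fx="\<lambda>x t. -(exp (r x t) * W x t)", OF oU cvU bU])
       (auto intro!: derivative_eq_intros dW continuous_intros cr cR cW)
  have hZ: "integral {0..1} (\<lambda>t. -(exp (r \<beta> t) * W \<beta> t)) = 0"
    by (rule deriv_eq_on_open[OF oU bU LZ DERIV_const[of 0 "at \<beta>"]]) (simp add: integral_unique[OF Z0])
  have G: "integral {0..1} (\<lambda>t. r \<beta> t * (2*x^2*(1 - exp (r x t)))) =
      integral {0..1} (\<lambda>t. r x t * (2*\<beta>^2*(1 - exp (r \<beta> t))))" if "x \<in> U" for x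
  proof -
    have a: "integral {0..1} (\<lambda>s. r \<beta> s * (2*x^2*(1 - exp (r x s)))) = - integral {0..1} (\<lambda>s. dr \<beta> s * dr x s)"
      by (rule green01[OF R1[OF bU] R1[OF that] R2[OF that]])
         (auto intro!: continuous_intros cr that R30 R31)
    have b: "integral {0..1} (\<lambda>s. r x s * (2*\<beta>^2*(1 - exp (r \<beta> s)))) = - integral {0..1} (\<lambda>s. dr x s * dr \<beta> s)"
      by (rule green01[OF R1[OF that] R1[OF bU] R2[OF bU]])
         (auto intro!: continuous_intros cr bU R30 R31)
    have c: "(\<lambda>s. dr \<beta> s * dr x s) = (\<lambda>s. dr x s * dr \<beta> s)"
      by (rule ext) (rule mult.commute)
    show ?thesis by (simp only: a b c)
  qed
  have L1: "((\<lambda>x. integral {0..1} (\<lambda>t. r \<beta> t * (2*x^2*(1 - exp (r x t))))) has_real_derivative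
      integral {0..1} (\<lambda>t. r \<beta> t * (4*\<beta>*(1 - exp (r \<beta> t)) - 2*\<beta>^2*(exp (r \<beta> t) * W \<beta> t)))) (at \<beta>)"
    by (rule leib[where f="\<lambda>x t. r \<beta> t * (2*x^2*(1 - exp (r x t)))"
          and fx="\<lambda>x t. r \<beta> t * (4*x*(1 - exp (r x t)) - 2*x^2*(exp (r x t) * W x t))", OF oU cvU bU])
       (auto intro!: derivative_eq_intros dW continuous_intros cr cR cW crb bU simp: algebra_simps)
  have L2: "((\<lambda>x. integral {0..1} (\<lambda>t. r x t * (2*\<beta>^2*(1 - exp (r \<beta> t))))) has_real_derivative
      integral {0..1} (\<lambda>t. W \<beta> t * (2*\<beta>^2*(1 - exp (r \<beta> t))))) (at \<beta>)"
  proof -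
    have crb': "continuous_on (U \<times> {0..1}) (\<lambda>p. exp (r \<beta> (snd p)))"
      by (intro continuous_intros crb)
    show ?thesis
      by (rule leib[where f="\<lambda>x t. r x t * (2*\<beta>^2*(1 - exp (r \<beta> t)))"
          and fx="\<lambda>x t. W x t * (2*\<beta>^2*(1 - exp (r \<beta> t)))", OF oU cvU bU])
         (auto intro!: derivative_eq_intros dW continuous_intros cr cR cW crb crb' bU)
  qed
  have eqd: "integral {0..1} (\<lambda>t. r \<beta> t * (4*\<beta>*(1 - exp (r \<beta> t)) - 2*\<beta>^2*(exp (r \<beta> t) * W \<beta> t)))
      = integral {0..1} (\<lambda>t. W \<beta> t * (2*\<beta>^2*(1 - exp (r \<beta> t))))"
    by (rule deriv_eq_on_open[OF oU bU L1 L2 G])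
  have LM: "((\<lambda>x. integral {0..1} (\<lambda>t. r x t * (1 + exp (r x t)))) has_real_derivative
      integral {0..1} (\<lambda>t. W \<beta> t * (1 + exp (r \<beta> t)) + r \<beta> t * (exp (r \<beta> t) * W \<beta> t))) (at \<beta>)"
    by (rule leib[where f="\<lambda>x t. r x t * (1 + exp (r x t))"
          and fx="\<lambda>x t. W x t * (1 + exp (r x t)) + r x t * (exp (r x t) * W x t)", OF oU cvU bU])
       (auto intro!: derivative_eq_intros dW continuous_intros cr cR cW simp: algebra_simps)
  define P where "P = integral {0..1} (\<lambda>t. r \<beta> t * (1 - exp (r \<beta> t)))"
  define FM where "FM = (\<lambda>t. W \<beta> t * (1 + exp (r \<beta> t)) + r \<beta> t * (exp (r \<beta> t) * W \<beta> t))"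
  have crB: "continuous_on {0..1} (r \<beta>)" by (rule cr[OF bU])
  have hP: "((\<lambda>t. r \<beta> t * (1 - exp (r \<beta> t))) has_integral P) {0..1}"
    unfolding P_def by (rule intI) (auto intro!: continuous_intros crB)
  have hI1: "((\<lambda>t. r \<beta> t * (4*\<beta>*(1 - exp (r \<beta> t)) - 2*\<beta>^2*(exp (r \<beta> t) * W \<beta> t))) has_integral
      integral {0..1} (\<lambda>t. W \<beta> t * (2*\<beta>^2*(1 - exp (r \<beta> t))))) {0..1}"
    unfolding eqd[symmetric] by (rule intI) (auto intro!: continuous_intros crB cWb)
  have hI2: "((\<lambda>t. W \<beta> t * (2*\<beta>^2*(1 - exp (r \<beta> t)))) has_integral
      integral {0..1} (\<lambda>t. W \<beta> t * (2*\<beta>^2*(1 - exp (r \<beta> t))))) {0..1}"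
    by (rule intI) (auto intro!: continuous_intros crB cWb)
  have hZ': "((\<lambda>t. -(exp (r \<beta> t) * W \<beta> t)) has_integral 0) {0..1}"
  proof -
    have "((\<lambda>t. -(exp (r \<beta> t) * W \<beta> t)) has_integral integral {0..1} (\<lambda>t. -(exp (r \<beta> t) * W \<beta> t))) {0..1}"
      by (rule intI) (auto intro!: continuous_intros crB cWb)
    then show ?thesis unfolding hZ .
  qed
  have hFM: "(FM has_integral integral {0..1} FM) {0..1}"
    unfolding FM_def by (rule intI) (auto intro!: continuous_intros crB cWb)
  have pw: "(\<lambda>t. (2*\<beta>^2) * FM t) = (\<lambda>t. W \<beta> t * (2*\<beta>^2*(1 - exp (r \<beta> t)))
        - r \<beta> t * (4*\<beta>*(1 - exp (r \<beta> t)) - 2*\<beta>^2*(exp (r \<beta> t) * W \<beta> t))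
        + 4*\<beta> * (r \<beta> t * (1 - exp (r \<beta> t)))
        - 4*\<beta>^2 * (-(exp (r \<beta> t) * W \<beta> t)))"
    unfolding FM_def by (rule ext) (simp add: algebra_simps)
  have "((\<lambda>t. (2*\<beta>^2) * FM t) has_integral
      (integral {0..1} (\<lambda>t. W \<beta> t * (2*\<beta>^2*(1 - exp (r \<beta> t))))
        - integral {0..1} (\<lambda>t. W \<beta> t * (2*\<beta>^2*(1 - exp (r \<beta> t))))
        + 4*\<beta> * P - 4*\<beta>^2 * 0)) {0..1}"
    unfolding pw
    by (rule has_integral_diff[OF has_integral_add[OF has_integral_diff[OF hI2 hI1] has_integral_mult_right[OF hP]]
          has_integral_mult_right[OF hZ']])
  then have "((\<lambda>t. (2*\<beta>^2) * FM t) has_integral 4*\<beta>*P) {0..1}" by simp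
  moreover have "((\<lambda>t. (2*\<beta>^2) * FM t) has_integral (2*\<beta>^2) * integral {0..1} FM) {0..1}"
    by (rule has_integral_mult_right[OF hFM])
  ultimately have "(2*\<beta>^2) * integral {0..1} FM = 4*\<beta>*P"
    using has_integral_unique by blast
  then have FMv: "integral {0..1} FM = 2*P/\<beta>"
    using Upos[OF bU] by (simp add: field_simps power2_eq_square)
  define Mf where "Mf = (\<lambda>x. 1/2 * integral {0..1} (\<lambda>s. r x s * (1 + exp (r x s))))"
  have MfE: "Mfun phi = Mf" by (rule ext) (simp add: Mfun_def Mf_def rr)
  have Mder: "(Mf has_real_derivative (1/\<beta>) * P) (at \<beta>)"
  proof -
    have "(Mf has_real_derivative 1/2 * integral {0..1} FM) (at \<beta>)"
      unfolding Mf_def FM_def by (rule DERIV_cmult[OF LM])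
    then show ?thesis by (rule DERIV_cong) (simp add: FMv)
  qed
  define f0 where "f0 = exp (r \<beta> 0) - r \<beta> 0"
  have r0: "r \<beta> 0 = phi (\<beta> / sqrt pi) 0" by (simp add: r_def)
  define Kf where "Kf = (\<lambda>s. dr \<beta> s * dr \<beta> s + 4*\<beta>^2*(exp (r \<beta> s) - r \<beta> s))"
  have dK: "(Kf has_real_derivative 0) (at s)" for s
    unfolding Kf_def by (auto intro!: derivative_eq_intros R1[OF bU] R2[OF bU] simp: algebra_simps)
  have en: "dr \<beta> t * dr \<beta> t = 4*\<beta>^2*(f0 - exp (r \<beta> t) + r \<beta> t)" for t
  proof -
    have "Kf t = Kf 0" by (rule DERIV_isconst_all) (use dK in blast)
    then show ?thesis unfolding Kf_def f0_def using R30[OF bU] by (simp add: algebra_simps)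
  qed
  have gr: "integral {0..1} (\<lambda>s. r \<beta> s * (2*\<beta>^2*(1 - exp (r \<beta> s)))) = - integral {0..1} (\<lambda>s. dr \<beta> s * dr \<beta> s)"
    by (rule green01[OF R1[OF bU] R1[OF bU] R2[OF bU]])
       (auto intro!: continuous_intros cr bU R30 R31)
  have h1: "((\<lambda>s. r \<beta> s * (2*\<beta>^2*(1 - exp (r \<beta> s)))) has_integral
      - integral {0..1} (\<lambda>s. dr \<beta> s * dr \<beta> s)) {0..1}"
    unfolding gr[symmetric] by (rule intI) (auto intro!: continuous_intros crB)
  have h2: "((\<lambda>s. dr \<beta> s * dr \<beta> s) has_integral integral {0..1} (\<lambda>s. dr \<beta> s * dr \<beta> s)) {0..1}"
    by (rule intI) (auto intro!: continuous_intros cdr[OF bU])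
  have h3: "((\<lambda>s::real. 4*\<beta>^2*f0) has_integral 4*\<beta>^2*f0) {0..1}"
    using has_integral_const_real[of "4*\<beta>^2*f0" 0 1] by simp
  have h4: "((\<lambda>s. exp (r \<beta> s)) has_integral 1) {0..1}"
  proof -
    have "((\<lambda>s. 1 - (1 - exp (r \<beta> s))) has_integral 1 - 0) {0..1}"
      using has_integral_diff[OF has_integral_const_real[of 1 0 1] Z0[OF bU]] by simp
    then show ?thesis by simp
  qed
  have pw2: "(\<lambda>s. (2*\<beta>^2) * (r \<beta> s * (3 - exp (r \<beta> s)))) = (\<lambda>s. r \<beta> s * (2*\<beta>^2*(1 - exp (r \<beta> s))) + dr \<beta> s * dr \<beta> s - 4*\<beta>^2*f0
        + 4*\<beta>^2 * exp (r \<beta> s))"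
    by (rule ext) (simp only: en, simp add: algebra_simps)
  have "((\<lambda>s. (2*\<beta>^2) * (r \<beta> s * (3 - exp (r \<beta> s)))) has_integral
      (- integral {0..1} (\<lambda>s. dr \<beta> s * dr \<beta> s) + integral {0..1} (\<lambda>s. dr \<beta> s * dr \<beta> s)
        - 4*\<beta>^2*f0 + 4*\<beta>^2 * 1)) {0..1}"
    unfolding pw2
    by (rule has_integral_add[OF has_integral_diff[OF has_integral_add[OF h1 h2] h3] has_integral_mult_right[OF h4]])
  then have "((\<lambda>s. (2*\<beta>^2) * (r \<beta> s * (3 - exp (r \<beta> s)))) has_integral 4*\<beta>^2*(1 - f0)) {0..1}"
    by (simp add: algebra_simps)
  moreover have "((\<lambda>s. (2*\<beta>^2) * (r \<beta> s * (3 - exp (r \<beta> s)))) has_integral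
      (2*\<beta>^2) * integral {0..1} (\<lambda>s. r \<beta> s * (3 - exp (r \<beta> s)))) {0..1}"
    by (intro has_integral_mult_right intI continuous_intros crB)
  ultimately have "(2*\<beta>^2) * integral {0..1} (\<lambda>s. r \<beta> s * (3 - exp (r \<beta> s))) = 4*\<beta>^2*(1 - f0)"
    using has_integral_unique by blast
  moreover have aux: "1/2 * X = 1 - f0" if "(2*\<beta>^2) * X = 4*\<beta>^2*(1 - f0)" for X :: real
  proof -
    from that have "\<beta>^2 * (X - 2*(1 - f0)) = 0" by algebra
    then have "X - 2*(1 - f0) = 0" using Upos[OF bU] by simp
    then show ?thesis by simp
  qed
  ultimately have I3: "1/2 * integral {0..1} (\<lambda>s. r \<beta> s * (3 - exp (r \<beta> s))) = 1 - f0"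
    by blast
  have I3': "integral {0..1} (\<lambda>s. r \<beta> s * (3 - exp (r \<beta> s))) =
      integral {0..1} (\<lambda>s. r \<beta> s * (1 + exp (r \<beta> s))) + 2 * P"
  proof -
    have "((\<lambda>s. r \<beta> s * (1 + exp (r \<beta> s)) + 2 * (r \<beta> s * (1 - exp (r \<beta> s)))) has_integral
        integral {0..1} (\<lambda>s. r \<beta> s * (1 + exp (r \<beta> s))) + 2 * P) {0..1}"
      by (intro has_integral_add has_integral_mult_right hP intI continuous_intros crB)
    moreover have "\<And>s. r \<beta> s * (1 + exp (r \<beta> s)) + 2 * (r \<beta> s * (1 - exp (r \<beta> s))) =
        r \<beta> s * (3 - exp (r \<beta> s))" by (simp add: algebra_simps)
    ultimately show ?thesis by (simp add: integral_unique)
  qed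
  have xM: "((\<lambda>x. x * Mf x) has_real_derivative
      1/2 * integral {0..1} (\<lambda>s. r \<beta> s * (3 - exp (r \<beta> s)))) (at \<beta>)"
  proof -
    have "((\<lambda>x. x * Mf x) has_real_derivative 1 * Mf \<beta> + (1/\<beta>) * P * \<beta>) (at \<beta>)"
      by (rule DERIV_mult[OF DERIV_ident Mder])
    then show ?thesis
    proof (rule DERIV_cong)
      have e1: "(1/\<beta>) * P * \<beta> = P" using Upos[OF bU] by simp
      show "1 * Mf \<beta> + (1/\<beta>) * P * \<beta> = 1/2 * integral {0..1} (\<lambda>s. r \<beta> s * (3 - exp (r \<beta> s)))"
        unfolding e1 I3' Mf_def by (simp add: algebra_simps)
    qed
  qed
  show ?thesis
    unfolding MfE rr
    using Mder xM I3 unfolding P_def f0_def r0 by simp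
qed

end
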